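(* Let $i,j$ be positive integers with $i\mid j$, and write $i=uv$, where $v$ is the largest divisor of $i$ coprime with $j/i$. Let $C_j$ be a cyclic group of order $j$ and $C_i$ its (unique) subgroup of order $i$. Then (1) every element of a generating coset of $C_j/C_i$ has order divisible by $j/v$; (2) if $d\mid v$, then the number of elements of order $jd/v$ in a generating coset of $C_j/C_i$ is $u\,\phi(d)$, where $\phi$ is Euler's totient function.
   Context: A generating coset of $C_j/C_i$ is a coset of $C_i$ in $C_j$ which generates the quotient group $C_j/C_i$. *)

theory Defs
  imports "HOL-Algebra.Algebra" "HOL-Number_Theory.Totient"
begin

definition largest_coprime_divisor :: "nat \<Rightarrow> nat \<Rightarrow> nat" where
  "largest_coprime_divisor i k = Max {w. w dvd i \<and> coprime w k}"

definition generating_coset :: "('a, 'b) monoid_scheme \<Rightarrow> 'a set \<Rightarrow> 'a set \<Rightarrow> bool" where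
  "generating_coset G H C \<longleftrightarrow>
     C \<in> rcosets\<^bsub>G\<^esub> H \<and> generate (G Mod H) {C} = carrier (G Mod H)"

end

theory Submission
  imports Defs
begin

lemma count_periodic:
  fixes P :: "nat \<Rightarrow> bool" assumes per: "\<And>t. P (t + v) = P t"
  shows "card {t. t < n*v \<and> P t} = n * card {t. t < v \<and> P t}"
proof (induction n)
  case 0 then show ?case by simp
next
  case (Suc n)
  have perm: "P (t + m*v) = P t" for t m
  proof (induction m)
    case (Suc m)
    have "t + Suc m * v = (t + m*v) + v" by simp
    then show ?case using per[of "t + m*v"] Suc by (simp add: add.assoc add.commute add.left_commute)
  qed simp
  have eq: "{t. t < Suc n*v \<and> P t} = {t. t < n*v \<and> P t} \<union> (\<lambda>t. t + n*v) ` {t. t < v \<and> P t}"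
  proof (rule equalityI; rule subsetI)
    fix x assume x: "x \<in> {t. t < Suc n*v \<and> P t}"
    show "x \<in> {t. t < n*v \<and> P t} \<union> (\<lambda>t. t + n*v) ` {t. t < v \<and> P t}"
    proof (cases "x < n*v")
      case True then show ?thesis using x by auto
    next
      case False
      then have "x = (x - n*v) + n*v" "x - n*v < v" using x by auto
      then show ?thesis using x perm[of "x - n*v" n] by (metis (mono_tags, lifting) UnI2 image_eqI mem_Collect_eq)
    qed
  next
    fix x assume "x \<in> {t. t < n*v \<and> P t} \<union> (\<lambda>t. t + n*v) ` {t. t < v \<and> P t}"
    then show "x \<in> {t. t < Suc n*v \<and> P t}" using perm by auto
  qed
  have "card ({t. t < n*v \<and> P t} \<union> (\<lambda>t. t + n*v) ` {t. t < v \<and> P t})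
      = card {t. t < n*v \<and> P t} + card ((\<lambda>t. t + n*v) ` {t. t < v \<and> P t})"
    by (rule card_Un_disjoint) auto
  also have "card ((\<lambda>t. t + n*v) ` {t. t < v \<and> P t}) = card {t. t < v \<and> P t}"
    by (rule card_image) (auto simp: inj_on_def)
  finally show ?case using eq Suc by simp
qed

lemma count_shift:
  fixes K v c e :: nat
  assumes cop: "coprime K v" and v: "v > 0"
  shows "card {t. t < v \<and> gcd (c + K*t) v = e} = card {k\<in>{0<..v}. gcd k v = e}"
proof -
  define f where "f t = (if (c + K*t) mod v = 0 then v else (c + K*t) mod v)" for t
  have gf: "gcd (f t) v = gcd (c + K*t) v" for t
  proof (cases "(c + K*t) mod v = 0")
    case True
    then show ?thesis unfolding f_def by (metis gcd_nat.idem gcd_red_nat gcd_0_nat gcd.commute)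
  next
    case False
    then show ?thesis unfolding f_def by (metis gcd.commute gcd_red_nat)
  qed
  have inj: "inj_on f {..<v}"
  proof (rule inj_onI)
    fix x y assume x: "x \<in> {..<v}" and y: "y \<in> {..<v}" and e: "f x = f y"
    have "(c + K*x) mod v = (c + K*y) mod v"
      using e v mod_less_divisor[OF v, of "c+K*x"] mod_less_divisor[OF v, of "c+K*y"] unfolding f_def by (auto split: if_splits) (metis mod_less_divisor less_irrefl)
    then have "[K*x = K*y] (mod v)"
      by (metis cong_add_lcancel_nat cong_def)
    then have "[x = y] (mod v)"
      using cop by (metis cong_mult_lcancel_nat)
    then show "x = y" using x y by (simp add: cong_def)
  qed
  have sub: "f ` {..<v} \<subseteq> {0<..v}"
    using v by (auto simp: f_def)
  have cardeq: "card (f ` {..<v}) = card {0<..v}"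
    using inj by (simp add: card_image)
  have im: "f ` {..<v} = {0<..v}"
    using card_subset_eq[OF _ sub cardeq] by simp
  have seteq: "{k\<in>{0<..v}. gcd k v = e} = f ` {t. t < v \<and> gcd (c + K*t) v = e}"
  proof (rule equalityI; rule subsetI)
    fix k assume k: "k \<in> {k\<in>{0<..v}. gcd k v = e}"
    then obtain t where t: "t < v" "k = f t" using im by (metis (no_types, lifting) image_iff lessThan_iff mem_Collect_eq)
    then show "k \<in> f ` {t. t < v \<and> gcd (c + K*t) v = e}" using k gf by auto
  next
    fix k assume "k \<in> f ` {t. t < v \<and> gcd (c + K*t) v = e}"
    then obtain t where t: "t < v" "gcd (c + K*t) v = e" "k = f t" by auto
    then have "k \<in> {0<..v}" using im by auto
    then show "k \<in> {k\<in>{0<..v}. gcd k v = e}" using t gf by auto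
  qed
  have "inj_on f {t. t < v \<and> gcd (c + K*t) v = e}"
    by (rule inj_on_subset[OF inj]) auto
  then show ?thesis using seteq by (simp add: card_image)
qed

lemma lcd_props:
  fixes i K :: nat assumes "i > 0"
  shows "largest_coprime_divisor i K dvd i" "coprime (largest_coprime_divisor i K) K"
    "\<And>w. w dvd i \<Longrightarrow> coprime w K \<Longrightarrow> w dvd largest_coprime_divisor i K"
proof -
  let ?S = "{w. w dvd i \<and> coprime w K}"
  have fin: "finite ?S" using assms by (auto intro: finite_subset[of _ "{..i}"] dvd_imp_le)
  have ne: "1 \<in> ?S" by simp
  have mem: "largest_coprime_divisor i K \<in> ?S"
    unfolding largest_coprime_divisor_def using fin ne by (metis Max_in empty_iff)
  then show "largest_coprime_divisor i K dvd i" "coprime (largest_coprime_divisor i K) K" by auto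
  fix w assume w: "w dvd i" "coprime w K"
  let ?v = "largest_coprime_divisor i K"
  have "coprime (w * ?v) K" using w mem by simp
  moreover have "lcm w ?v dvd w * ?v" by (simp add: lcm_least)
  ultimately have "coprime (lcm w ?v) K" by (metis coprime_divisors dvd_refl)
  then have "lcm w ?v \<in> ?S" using w mem by (auto simp: lcm_least)
  then have le: "lcm w ?v \<le> ?v"
    unfolding largest_coprime_divisor_def using fin by (simp add: Max_ge)
  have "?v dvd lcm w ?v" by simp
  moreover have "lcm w ?v > 0" using w mem assms by (metis dvd_0_left_iff lcm_pos_nat mem_Collect_eq neq0_conv)
  ultimately have "lcm w ?v = ?v" using le by (meson dvd_imp_le le_antisym)
  then show "w dvd ?v" by (metis dvd_lcm1)
qed


lemma div_cond:
  fixes e v j d :: nat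
  assumes "e dvd v" "v dvd j" "d dvd v" "j > 0"
  shows "(j div e = j * d div v) \<longleftrightarrow> (e = v div d)"
proof -
  obtain s where vs: "v = e*s" using assms(1) by (auto elim: dvdE)
  obtain m where jm: "j = v*m" using assms(2) by (auto elim: dvdE)
  obtain r where vr: "v = d*r" using assms(3) by (auto elim: dvdE)
  have v0: "v > 0" using jm assms(4) by (cases v) auto
  have e0: "e > 0" and s0: "s > 0" using vs v0 by auto
  have d0: "d > 0" and r0: "r > 0" using vr v0 by auto
  have m0: "m > 0" using jm assms(4) by (cases m) auto
  have 1: "j div e = s*m" using jm vs e0 by simp
  have 2: "j * d div v = d*m" using jm v0 by simp
  have 3: "v div d = r" using vr d0 by simp
  have "s*m = d*m \<longleftrightarrow> s = d" using m0 by simp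
  moreover have "s = d \<longleftrightarrow> e = r"
  proof
    assume "s = d" then show "e = r" using vs vr d0 by (metis mult.commute mult_cancel_left neq0_conv)
  next
    assume "e = r" then show "s = d" using vs vr r0 by (metis mult.commute mult_cancel_left neq0_conv)
  qed
  ultimately show ?thesis using 1 2 3 by simp
qed

lemma div_dvd_cond:
  fixes e v j :: nat
  assumes "e dvd v" "v dvd j" "j > 0"
  shows "(j div v) dvd (j div e)"
proof -
  obtain s where vs: "v = e*s" using assms(1) by (auto elim: dvdE)
  obtain m where jm: "j = v*m" using assms(2) by (auto elim: dvdE)
  have v0: "v > 0" using jm assms(3) by (cases v) auto
  have e0: "e > 0" using vs v0 by auto
  have "j div e = s*m" using jm vs e0 by simp
  moreover have "j div v = m" using jm v0 by simp
  ultimately show ?thesis by simp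
qed

theorem lemma3p1:
  fixes G :: "('a, 'b) monoid_scheme" and H C :: "'a set" and i j :: nat
  assumes "i > 0" and "j > 0" and "i dvd j"
    and "group G" and "cyclic_group G" and "finite (carrier G)" and "order G = j"
    and "subgroup H G" and "card H = i"
    and "generating_coset G H C"
  defines "v \<equiv> largest_coprime_divisor i (j div i)"
  defines "u \<equiv> i div v"
  shows "(\<forall>x\<in>C. (j div v) dvd group.ord G x)
       \<and> (\<forall>d. d dvd v \<longrightarrow>
              card {x\<in>C. group.ord G x = j * d div v} = u * totient d)"
proof -
  interpret G: group G by fact
  define K where "K = j div i"
  have jK: "j = i * K" using assms(3) by (simp add: K_def)
  have K0: "K > 0" using assms(2) jK by (cases K) auto
  have vdef: "v = largest_coprime_divisor i K" by (simp add: v_def K_def)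
  have vi: "v dvd i" and vK: "coprime v K" and vmax: "\<And>w. w dvd i \<Longrightarrow> coprime w K \<Longrightarrow> w dvd v"
    using lcd_props[OF assms(1)] vdef by auto
  have v0: "v > 0" using vi assms(1) by (cases v) auto
  have iuv: "i = u * v" using vi u_def by simp
  have vj: "v dvd j" using vi jK by simp
  obtain g where g: "g \<in> carrier G" "carrier G = range (\<lambda>n::int. g [^]\<^bsub>G\<^esub> n)"
    using assms(5) G.cyclic_group by auto
  have ordg: "G.ord g = j"
  proof -
    have "generate G {g} = carrier G" using G.generate_pow[OF g(1)] g(2) by auto
    then show ?thesis using G.generate_pow_card[OF g(1)] assms(7) by (simp add: order_def)
  qed
  have powmod: "g [^]\<^bsub>G\<^esub> a = g [^]\<^bsub>G\<^esub> (a mod j)" for a :: nat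
  proof -
    have "g [^]\<^bsub>G\<^esub> a = g [^]\<^bsub>G\<^esub> (j * (a div j)) \<otimes>\<^bsub>G\<^esub> g [^]\<^bsub>G\<^esub> (a mod j)"
      by (metis div_mult_mod_eq G.nat_pow_mult g(1) mult.commute)
    also have "g [^]\<^bsub>G\<^esub> (j * (a div j)) = \<one>\<^bsub>G\<^esub>"
      by (metis G.nat_pow_one G.nat_pow_pow G.pow_ord_eq_1 g(1) ordg)
    finally show ?thesis using g(1) by simp
  qed
  have carr: "\<exists>a<j. x = g [^]\<^bsub>G\<^esub> a" if "x \<in> carrier G" for x
  proof -
    have "x \<in> range (\<lambda>n::int. g [^]\<^bsub>G\<^esub> n)" using that g(2) by simp
    then obtain n :: int where n: "x = g [^]\<^bsub>G\<^esub> n" by (rule rangeE)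
    have e: "int (nat (n mod int j)) = n mod int j" using assms(2) by simp
    have "int j dvd (int (nat (n mod int j)) - n)"
      unfolding e using mod_eq_dvd_iff[of "n mod int j" "int j" n] by simp
    then have "g [^]\<^bsub>G\<^esub> n = g [^]\<^bsub>G\<^esub> (int (nat (n mod int j)))"
      using G.int_pow_eq[OF g(1), of n "int (nat (n mod int j))"] ordg by argo
    then have "x = g [^]\<^bsub>G\<^esub> (nat (n mod int j))" using n by (metis int_pow_int)
    moreover have "nat (n mod int j) < j"
    proof -
      have "n mod int j < int j" "0 \<le> n mod int j" using assms(2) by simp_all
      then show ?thesis by (simp add: nat_less_iff)
    qed
    ultimately show ?thesis by (intro exI[of _ "nat (n mod int j)"] conjI)
  qed
  have pinj: "a = b" if "a < j" "b < j" "g [^]\<^bsub>G\<^esub> a = g [^]\<^bsub>G\<^esub> b" for a b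
  proof -
    have "a \<in> {0..G.ord g - 1}" "b \<in> {0..G.ord g - 1}" using that(1,2) ordg by auto
    then show ?thesis using G.ord_inj[OF g(1)] that(3) unfolding inj_on_def by blast
  qed
  have ordpow: "G.ord (g [^]\<^bsub>G\<^esub> a) = j div gcd a j" for a :: nat
    using G.ord_pow_gen[OF g(1), of a] ordg assms(2) by (cases "a = 0") (simp_all add: gcd.commute)
  have Hpow: "x [^]\<^bsub>G\<^esub> i = \<one>\<^bsub>G\<^esub>" if "x \<in> H" for x
  proof -
    let ?S = "subgroup_generated G H"
    have cS: "carrier ?S = H" using assms(8) by (simp add: subgroup.carrier_subgroup_generated_subgroup)
    have "x [^]\<^bsub>?S\<^esub> order ?S = \<one>\<^bsub>?S\<^esub>"
      using group.pow_order_eq_1[OF G.group_subgroup_generated, of x H] cS that by simp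
    then show ?thesis using cS assms(9) by (simp add: order_def pow_subgroup_generated)
  qed
  have H_eq: "H = (\<lambda>t. g [^]\<^bsub>G\<^esub> (K*t)) ` {..<i}"
  proof -
    have fin: "finite ((\<lambda>t. g [^]\<^bsub>G\<^esub> (K*t)) ` {..<i})" by simp
    have sub: "H \<subseteq> (\<lambda>t. g [^]\<^bsub>G\<^esub> (K*t)) ` {..<i}"
    proof
      fix x assume x: "x \<in> H"
      then have "x \<in> carrier G" using assms(8) subgroup.subset by blast
      then obtain a where a: "a < j" "x = g [^]\<^bsub>G\<^esub> a" using carr by blast
      have "g [^]\<^bsub>G\<^esub> (a * i) = \<one>\<^bsub>G\<^esub>" using Hpow[OF x] a g(1) by (simp add: G.nat_pow_pow)
      then have "j dvd a * i" using G.pow_eq_id[OF g(1)] ordg by simp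
      then have "K dvd a" using jK assms(1) by (simp add: mult.commute)
      then obtain t where t: "a = K * t" by (auto elim: dvdE)
      have "t < i" using a(1) t jK K0 by simp
      then show "x \<in> (\<lambda>t. g [^]\<^bsub>G\<^esub> (K*t)) ` {..<i}" using a t by auto
    qed
    have "inj_on (\<lambda>t. g [^]\<^bsub>G\<^esub> (K*t)) {..<i}"
    proof (rule inj_onI)
      fix s t assume "s \<in> {..<i}" "t \<in> {..<i}" "g [^]\<^bsub>G\<^esub> (K*s) = g [^]\<^bsub>G\<^esub> (K*t)"
      moreover have "K*s < j" "K*t < j" using calculation jK K0 by auto
      ultimately have "K*s = K*t" using pinj by blast
      then show "s = t" using K0 by simp
    qed
    then have ceq: "card H = card ((\<lambda>t. g [^]\<^bsub>G\<^esub> (K*t)) ` {..<i})"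
      using assms(9) by (simp add: card_image)
    show ?thesis using card_subset_eq[OF fin sub ceq] by simp
  qed
  have Cr: "C \<in> rcosets\<^bsub>G\<^esub> H" and Cgen: "generate (G Mod H) {C} = carrier (G Mod H)"
    using assms(10) unfolding generating_coset_def by auto
  obtain y where y: "y \<in> carrier G" "C = H #>\<^bsub>G\<^esub> y" using Cr unfolding RCOSETS_def by auto
  obtain c0 where c0: "c0 < j" "y = g [^]\<^bsub>G\<^esub> c0" using carr[OF y(1)] by blast
  define c where "c = c0 mod K"
  have cK: "c < K" using K0 by (simp add: c_def)
  have inimg: "g [^]\<^bsub>G\<^esub> a \<in> (\<lambda>t. g [^]\<^bsub>G\<^esub> (c + K*t)) ` {..<i}" if "a mod K = c" for a
  proof -
    have "a mod j mod K = c" using that jK by (simp add: mod_mod_cancel)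
    then have b: "a mod j = c + K * (a mod j div K)" by (metis mod_div_mult_eq add.commute mult.commute)
    have "a mod j < i * K" using assms(2) jK by simp
    then have "a mod j div K < i" by (rule less_mult_imp_div_less)
    moreover have "g [^]\<^bsub>G\<^esub> a = g [^]\<^bsub>G\<^esub> (c + K * (a mod j div K))" using powmod[of a] b by simp
    ultimately show ?thesis by blast
  qed
have injf: "inj_on (\<lambda>t. g [^]\<^bsub>G\<^esub> (c + K*t)) {..<i}"
  proof (rule inj_onI)
    fix s t assume st: "s \<in> {..<i}" "t \<in> {..<i}" "g [^]\<^bsub>G\<^esub> (c + K*s) = g [^]\<^bsub>G\<^esub> (c + K*t)"
    have lt: "c + K*r < j" if "r < i" for r
    proof -
      have "c + K*r < K*(Suc r)" using cK by simp
      also have "K * Suc r \<le> K * i" using that by (intro mult_le_mono2) simp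
      finally show ?thesis using jK by (simp add: mult.commute)
    qed
    have "c + K*s = c + K*t" using pinj[OF lt lt st(3)] st(1,2) by simp
    then show "s = t" using K0 by simp
  qed
  have Ceq: "C = (\<lambda>t. g [^]\<^bsub>G\<^esub> (c + K*t)) ` {..<i}"
  proof -
    have sub: "C \<subseteq> (\<lambda>t. g [^]\<^bsub>G\<^esub> (c + K*t)) ` {..<i}"
    proof
      fix x assume "x \<in> C"
      then obtain h where h: "h \<in> H" "x = h \<otimes>\<^bsub>G\<^esub> y" using y(2) unfolding r_coset_def by auto
      obtain t where t: "h = g [^]\<^bsub>G\<^esub> (K*t)" using h(1) H_eq by auto
      have "x = g [^]\<^bsub>G\<^esub> (K*t + c0)" using h(2) t c0(2) g(1) by (simp add: G.nat_pow_mult)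
      moreover have "(K*t + c0) mod K = c" by (simp add: c_def)
      ultimately show "x \<in> (\<lambda>t. g [^]\<^bsub>G\<^esub> (c + K*t)) ` {..<i}" using inimg by simp
    qed
    have cC: "card C = i" using G.card_rcosets_equal[OF Cr] assms(8,9) subgroup.subset by metis
    have "card ((\<lambda>t. g [^]\<^bsub>G\<^esub> (c + K*t)) ` {..<i}) = card C"
      using injf cC by (simp add: card_image)
    then show ?thesis using card_subset_eq[OF _ sub] by simp
  qed
  have comm: "comm_group G" using G.cyclic_imp_abelian_group assms(5) by blast
  have nH: "H \<lhd> G" using comm_group.subgroup_imp_normal[OF comm assms(8)] .
  interpret N: normal H G by (rule nH)
  have grp: "group (G Mod H)" by (rule N.factorgroup_is_group)
  have Hg: "H #>\<^bsub>G\<^esub> g \<in> carrier (G Mod H)" using g(1) by (simp add: carrier_FactGroup)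
  have Cc: "C \<in> carrier (G Mod H)" using y by (simp add: carrier_FactGroup)
  have "H #>\<^bsub>G\<^esub> g \<in> generate (G Mod H) {C}" using Hg Cgen by simp
  then obtain m :: int where m: "H #>\<^bsub>G\<^esub> g = C [^]\<^bsub>G Mod H\<^esub> m"
    unfolding group.generate_pow[OF grp Cc] by blast
  then have "H #>\<^bsub>G\<^esub> g = H #>\<^bsub>G\<^esub> (y [^]\<^bsub>G\<^esub> m)" using N.FactGroup_int_pow y by simp
  then have "g \<in> H #>\<^bsub>G\<^esub> (y [^]\<^bsub>G\<^esub> m)" using G.rcos_self[OF g(1) assms(8)] by simp
  then obtain h where h: "h \<in> H" "g = h \<otimes>\<^bsub>G\<^esub> y [^]\<^bsub>G\<^esub> m" unfolding r_coset_def by auto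
  obtain t where t: "h = g [^]\<^bsub>G\<^esub> (K*t)" using h(1) H_eq by auto
  have ym: "y [^]\<^bsub>G\<^esub> m = g [^]\<^bsub>G\<^esub> (int c0 * m)"
    using c0(2) G.int_pow_pow[OF g(1), of "int c0" m] by (simp add: int_pow_int)
  have "g [^]\<^bsub>G\<^esub> (int (K*t) + int c0 * m) = g [^]\<^bsub>G\<^esub> (int (K*t)) \<otimes>\<^bsub>G\<^esub> g [^]\<^bsub>G\<^esub> (int c0 * m)"
    by (rule G.int_pow_mult[OF g(1)])
  also have "\<dots> = h \<otimes>\<^bsub>G\<^esub> y [^]\<^bsub>G\<^esub> m" using t ym by (simp only: int_pow_int)
  also have "\<dots> = g [^]\<^bsub>G\<^esub> (1::int)" using h(2) g(1) by simp
  finally have "g [^]\<^bsub>G\<^esub> (1::int) = g [^]\<^bsub>G\<^esub> (int (K*t) + int c0 * m)" by simp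
  then have "int (G.ord g) dvd int (K*t) + int c0 * m - 1"
    by (rule iffD1[OF G.int_pow_eq[OF g(1)]])
  then have "int j dvd int (K*t) + int c0 * m - 1" unfolding ordg .
  moreover have "int K dvd int j" using jK by simp
  ultimately have "int K dvd int (K*t) + int c0 * m - 1" by (rule dvd_trans[rotated])
  then have "int K dvd int (K*t) + (int c0 * m - 1)" by (simp only: add_diff_eq)
  moreover have "int K dvd int (K*t)" by simp
  ultimately have dK: "int K dvd int c0 * m - 1" using dvd_add_right_iff by blast
  have "coprime (int c0) (int K)"
  proof (rule coprimeI)
    fix e assume "e dvd int c0" "e dvd int K"
    then have "e dvd int c0 * m" "e dvd int c0 * m - 1" using dK by (auto intro: dvd_trans)
    then have "e dvd int c0 * m - (int c0 * m - 1)" by (rule dvd_diff)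
    then have "e dvd 1" by simp
    then show "is_unit e" by simp
  qed
  then have copc: "coprime c K" using K0 by (simp add: c_def)
  have gcdred: "gcd a j = gcd a v" if "coprime a K" for a
  proof (rule dvd_antisym)
    have cg: "coprime (gcd a j) K" using that by (metis coprime_divisors gcd_dvd1 dvd_refl)
    moreover have "gcd a j dvd i * K" using jK by (metis gcd_dvd2)
    ultimately have "gcd a j dvd i" by (simp add: coprime_dvd_mult_left_iff)
    then have "gcd a j dvd v" using vmax cg by blast
    then show "gcd a j dvd gcd a v" by simp
    show "gcd a v dvd gcd a j" using vj by (meson dvd_trans gcd_dvd1 gcd_dvd2 gcd_greatest)
  qed
  have copa: "coprime (c + K*t) K" for t
  proof -
    have "(c + K*t) mod K = c" using cK by simp
    then show ?thesis using copc coprime_mod_left_iff[of K "c+K*t"] K0 by simp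
  qed
  have ordC: "G.ord (g [^]\<^bsub>G\<^esub> (c + K*t)) = j div gcd (c + K*t) v" for t
    using ordpow[of "c + K*t"] gcdred[OF copa[of t]] by simp
  have P1: "\<forall>x\<in>C. (j div v) dvd G.ord x"
  proof
    fix x assume "x \<in> C"
    then obtain t where t: "x = g [^]\<^bsub>G\<^esub> (c + K*t)" using Ceq by auto
    show "(j div v) dvd G.ord x" unfolding t ordC
      by (rule div_dvd_cond[OF gcd_dvd2 vj assms(2)])
  qed
  have P2: "card {x\<in>C. G.ord x = j * d div v} = u * totient d" if d: "d dvd v" for d
  proof -
    let ?f = "\<lambda>t. g [^]\<^bsub>G\<^esub> (c + K*t)"
    let ?Q = "\<lambda>t. gcd (c + K*t) v = v div d"
    have cond: "G.ord (?f t) = j * d div v \<longleftrightarrow> ?Q t" for t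
      unfolding ordC by (rule div_cond[OF gcd_dvd2 vj d assms(2)])
    have "{x\<in>C. G.ord x = j * d div v} = ?f ` {t\<in>{..<i}. ?Q t}"
      unfolding Ceq using cond by auto
    moreover have "{t\<in>{..<i}. ?Q t} = {t. t < u*v \<and> ?Q t}" using iuv by auto
    ultimately have "card {x\<in>C. G.ord x = j * d div v} = card {t. t < u*v \<and> ?Q t}"
      using injf by (metis (no_types, lifting) card_image inj_on_subset mem_Collect_eq subsetI)
    also have "\<dots> = u * card {t. t < v \<and> ?Q t}"
    proof (rule count_periodic)
      fix t
      have eq: "c + K*(t+v) = K*v + (c + K*t)" by (simp add: algebra_simps)
      have "gcd v (K*v + (c + K*t)) = gcd v (c + K*t)" by (rule gcd_add_mult)
      then have "gcd (K*v + (c + K*t)) v = gcd (c + K*t) v" by (simp only: gcd.commute)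
      then show "?Q (t + v) = ?Q t" unfolding eq by simp
    qed
    also have "card {t. t < v \<and> ?Q t} = card {k\<in>{0<..v}. gcd k v = v div d}"
      by (rule count_shift) (use vK v0 in \<open>simp_all add: coprime_commute\<close>)
    also have "\<dots> = totient (v div (v div d))"
      by (rule card_gcd_eq_totient[OF v0]) (use d in \<open>metis dvd_div_mult_self dvd_triv_left\<close>)
    also have "v div (v div d) = d"
    proof -
      obtain r where vr: "v = d*r" using d by (auto elim: dvdE)
      then have "d > 0" "r > 0" using v0 by auto
      then show ?thesis using vr by simp
    qed
    finally show ?thesis .
  qed
  show ?thesis using P1 P2 by blast
qed

end
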